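(* For $A,x\in\mathbb{R}$ define $E_0(A,x):=1$, $E_1(A,x):=e^{(1-x)A}$ and, for $n\ge2$, \[ E_n(A,x):=\begin{cases} \exp\!\Big(\big[x(E_1+E_3+\cdots+E_{n-1})-\tfrac n2\big]A\Big), & n \text{ even},\\[4pt] \exp\!\Big(\big[\tfrac{n+1}{2}-x(E_0+E_2+\cdots+E_{n-1})\big]A\Big), & n\text{ odd},\end{cases} \] with all $E_j$ evaluated at $(A,x)$. Define $\varphi_1(A,x):=x-1$, $\varphi_n(A,x):=\varphi_{n-1}(A,x)-1+xE_{n-1}(A,x)$ for $n\ge2$, and the polynomial $p_n(A):=\frac{\partial\varphi_n}{\partial x}(A,1)$. Then for every even $n\ge3$, \[ \frac{p_n(A)}{2-A}=p_{n-1}(A)-\frac{p_{n-2}(A)}{2-A}, \] and for every odd $n\ge3$, \[ \frac{p_n(A)}{2+A}=p_{n-1}(A)-\frac{p_{n-2}(A)}{2+A}. \] Equivalently, $p_n(A)=[2-(-1)^nA]\,p_{n-1}(A)-p_{n-2}(A)$ for all $n\ge3$. *)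

theory Defs
  imports "HOL-Analysis.Analysis"
begin

function E :: "nat \<Rightarrow> real \<Rightarrow> real \<Rightarrow> real" where
  "E n A x =
    (if n = 0 then 1
     else if n = 1 then exp ((1 - x) * A)
     else if even n then
       exp ((x * (\<Sum>j<n. if odd j then E j A x else 0) - real n / 2) * A)
     else
       exp ((real (n + 1) / 2 - x * (\<Sum>j<n. if even j then E j A x else 0)) * A))"
  by auto
termination
  by (relation "Wellfounded.measure (\<lambda>(n, A, x). n)") auto

declare E.simps [simp del]

fun phi :: "nat \<Rightarrow> real \<Rightarrow> real \<Rightarrow> real" where
  "phi 0 A x = x - 1"  (* unused: the paper starts at n = 1 *)
| "phi (Suc 0) A x = x - 1"
| "phi (Suc (Suc n)) A x = phi (Suc n) A x - 1 + x * E (Suc n) A x"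

definition p :: "nat \<Rightarrow> real \<Rightarrow> real" where
  "p n A = deriv (\<lambda>x. phi n A x) 1"

end

theory Submission
  imports Defs
begin

function ev :: "nat \<Rightarrow> real \<Rightarrow> real" where
  "ev n A =
    (if n = 0 then 0
     else if n = 1 then - A
     else if even n then
       A * (real n / 2 + (\<Sum>j<n. if odd j then ev j A else 0))
     else
       - A * (real (n + 1) / 2 + (\<Sum>j<n. if even j then ev j A else 0)))"
  by auto
termination
  by (relation "Wellfounded.measure (\<lambda>(n, A). n)") auto

declare ev.simps [simp del]

lemma sum_odd_ind: "(\<Sum>j<n. if odd j then (1::real) else 0) = real (n div 2)"
  by (induction n) (auto simp: lessThan_Suc)

lemma sum_even_ind: "(\<Sum>j<n. if even j then (1::real) else 0) = real ((n + 1) div 2)"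
  by (induction n) (auto simp: lessThan_Suc)

lemma E_at1: "E n A 1 = 1"
proof (induction n rule: less_induct)
  case (less n)
  have so: "(\<Sum>j<n. if odd j then E j A 1 else 0) = (\<Sum>j<n. if odd j then (1::real) else 0)"
    by (rule sum.cong) (auto simp: less)
  have se: "(\<Sum>j<n. if even j then E j A 1 else 0) = (\<Sum>j<n. if even j then (1::real) else 0)"
    by (rule sum.cong) (auto simp: less)
  show ?case
  proof (cases "n = 0 \<or> n = 1")
    case True then show ?thesis by (auto simp: E.simps)
  next
    case False
    show ?thesis
    proof (cases "even n")
      case True
      then have "real (n div 2) = real n / 2" by (auto elim: evenE)
      then show ?thesis using False True
        by (subst E.simps) (simp add: so sum_odd_ind)
    next
      case odd: False
      then have "real ((n+1) div 2) = real (n+1) / 2" by (auto elim: oddE)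
      then show ?thesis using False odd
        by (subst E.simps) (simp add: se sum_even_ind)
    qed
  qed
qed

lemma chain_even:
  assumes "(S has_real_derivative S') (at 1)"
  shows "((\<lambda>x. exp ((x * S x - c) * A)) has_real_derivative
             exp ((1 * S 1 - c) * A) * ((1 * S' + S 1) * A)) (at 1)"
  by (auto intro!: derivative_eq_intros assms simp: algebra_simps)

lemma chain_odd:
  assumes "(S has_real_derivative S') (at 1)"
  shows "((\<lambda>x. exp ((c - x * S x) * A)) has_real_derivative
             exp ((c - 1 * S 1) * A) * ((- (1 * S' + S 1)) * A)) (at 1)"
  by (auto intro!: derivative_eq_intros assms simp: algebra_simps)

lemma E_deriv: "((\<lambda>x. E n A x) has_real_derivative ev n A) (at 1)"
proof (induction n rule: less_induct)
  case (less n)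
  show ?case
  proof (cases "n = 0 \<or> n = 1")
    case True
    then show ?thesis
    proof
      assume "n = 0"
      then show ?thesis by (simp add: E.simps ev.simps)
    next
      assume n1: "n = 1"
      have "((\<lambda>x. exp ((1 - x) * A)) has_real_derivative exp ((1 - 1) * A) * (- A)) (at 1)"
        by (auto intro!: derivative_eq_intros)
      then show ?thesis using n1 by (simp add: E.simps ev.simps)
    qed
  next
    case False
    show ?thesis
    proof (cases "even n")
      case True
      let ?P = "\<lambda>j::nat. odd j"
      let ?S = "\<lambda>x. (\<Sum>j<n. if odd j then E j A x else 0)"
      let ?S' = "(\<Sum>j<n. if odd j then ev j A else 0)"
      have fe: "(\<lambda>x. E n A x) = (\<lambda>x. exp ((x * ?S x - real n / 2) * A))"
        using False True by (intro ext, subst E.simps) simp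
      have dS: "(?S has_real_derivative ?S') (at 1)"
      proof (rule DERIV_sum)
        fix j assume "j \<in> {..<n}"
        then have "((\<lambda>x. E j A x) has_real_derivative ev j A) (at 1)" by (intro less.IH) simp
        then show "((\<lambda>x. if ?P j then E j A x else 0) has_real_derivative (if ?P j then ev j A else 0)) (at 1)"
          by auto
      qed
      have S1: "?S 1 = real n / 2"
      proof -
        have "?S 1 = (\<Sum>j<n. if odd j then (1::real) else 0)"
          by (rule sum.cong) (auto simp: E_at1)
        also have "\<dots> = real n / 2" using True by (auto simp: sum_odd_ind elim: evenE)
        finally show ?thesis .
      qed
      have "((\<lambda>x. exp ((x * ?S x - real n / 2) * A)) has_real_derivative
             exp ((1 * ?S 1 - real n / 2) * A) * ((1 * ?S' + ?S 1) * A)) (at 1)"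
        by (rule chain_even[OF dS])
      moreover have "exp ((1 * ?S 1 - real n / 2) * A) * ((1 * ?S' + ?S 1) * A) = ev n A"
        using False True by (simp only: S1) (simp add: ev.simps[of n] algebra_simps)
      ultimately show ?thesis using fe by simp
    next
      case odd: False
      let ?P = "\<lambda>j::nat. even j"
      let ?S = "\<lambda>x. (\<Sum>j<n. if even j then E j A x else 0)"
      let ?S' = "(\<Sum>j<n. if even j then ev j A else 0)"
      have fe: "(\<lambda>x. E n A x) = (\<lambda>x. exp ((real (n + 1) / 2 - x * ?S x) * A))"
        using False odd by (intro ext, subst E.simps) simp
      have dS: "(?S has_real_derivative ?S') (at 1)"
      proof (rule DERIV_sum)
        fix j assume "j \<in> {..<n}"
        then have "((\<lambda>x. E j A x) has_real_derivative ev j A) (at 1)" by (intro less.IH) simp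
        then show "((\<lambda>x. if ?P j then E j A x else 0) has_real_derivative (if ?P j then ev j A else 0)) (at 1)"
          by auto
      qed
      have S1: "?S 1 = real (n + 1) / 2"
      proof -
        have "?S 1 = (\<Sum>j<n. if even j then (1::real) else 0)"
          by (rule sum.cong) (auto simp: E_at1)
        also have "\<dots> = real (n+1) / 2" using odd by (auto simp: sum_even_ind elim: oddE)
        finally show ?thesis .
      qed
      have "((\<lambda>x. exp ((real (n + 1) / 2 - x * ?S x) * A)) has_real_derivative
             exp ((real (n + 1) / 2 - 1 * ?S 1) * A) * ((- (1 * ?S' + ?S 1)) * A)) (at 1)"
        by (rule chain_odd[OF dS])
      moreover have "exp ((real (n + 1) / 2 - 1 * ?S 1) * A) * ((- (1 * ?S' + ?S 1)) * A) = ev n A"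
        using False odd by (simp only: S1) (simp add: ev.simps[of n] algebra_simps)
      ultimately show ?thesis using fe by simp
    qed
  qed
qed

fun pd :: "nat \<Rightarrow> real \<Rightarrow> real" where
  "pd 0 A = 1"
| "pd (Suc 0) A = 1"
| "pd (Suc (Suc n)) A = pd (Suc n) A + 1 + ev (Suc n) A"

lemma phi_deriv: "((\<lambda>x. phi n A x) has_real_derivative pd n A) (at 1)"
proof (induction n A rule: pd.induct)
  case (1 A) then show ?case by (auto intro!: derivative_eq_intros)
next
  case (2 A) then show ?case by (auto intro!: derivative_eq_intros)
next
  case (3 n A)
  have m: "((\<lambda>x. x * E (Suc n) A x) has_real_derivative
     1 * E (Suc n) A 1 + ev (Suc n) A * 1) (at 1)"
    by (rule DERIV_mult[OF DERIV_ident E_deriv])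
  have "((\<lambda>x. phi (Suc n) A x - 1 + x * E (Suc n) A x) has_real_derivative
     pd (Suc n) A - 0 + (1 * E (Suc n) A 1 + ev (Suc n) A * 1)) (at 1)"
    by (intro derivative_intros 3 m)
  then show ?case by (simp add: E_at1 add.assoc)
qed

lemma p_eq: "p n A = pd n A"
  unfolding p_def by (rule DERIV_imp_deriv[OF phi_deriv])

lemma pd_sum: "n \<ge> 1 \<Longrightarrow> pd n A = real n + (\<Sum>k<n. ev k A)"
proof (induction n A rule: pd.induct)
  case (1 A) then show ?case by simp
next
  case (2 A) then show ?case by (simp add: ev.simps)
next
  case (3 n A)
  then show ?case by (simp add: lessThan_Suc)
qed

lemma sum_split: "(\<Sum>j<m. (if odd j then f j else 0)) + (\<Sum>j<m. (if even j then f j else 0))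
   = (\<Sum>j<m. f j :: real)"
  unfolding sum.distrib[symmetric] by (rule sum.cong) auto

lemma ev0: "ev 0 A = 0" by (simp add: ev.simps)

lemma ev_diff:
  assumes "m \<ge> 2"
  shows "ev m A - ev (m - 1) A = (-1) ^ m * A * pd m A"
proof -
  have m: "m = Suc (m - 1)" "m - 1 \<noteq> 0" "m \<noteq> 0" "m \<noteq> 1" using assms by auto
  have split: "\<And>f. (\<Sum>j<m. f j) = f (m - 1) + (\<Sum>j<m - 1. f j :: real)"
    by (subst m(1), subst sum.lessThan_Suc) simp
  show ?thesis
  proof (cases "even m")
    case True
    have e1: "(\<Sum>j<m - 1. if even j then ev j A else 0) = (\<Sum>j<m. if even j then ev j A else 0)"
      using True m by (subst split) simp
    have "ev m A = A * (real m / 2 + (\<Sum>j<m. if odd j then ev j A else 0))"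
      using True m by (subst ev.simps) simp
    moreover have "ev (m - 1) A = - A * (real m / 2 + (\<Sum>j<m - 1. if even j then ev j A else 0))"
      using True m by (subst ev.simps) (auto simp: of_nat_diff ev0)
    moreover have "A * (\<Sum>k<m. ev k A) = A * (\<Sum>j<m. if odd j then ev j A else 0) + A * (\<Sum>j<m. if even j then ev j A else 0)"
      using sum_split[where m=m and f="\<lambda>j. ev j A"] by (metis distrib_left)
    ultimately show ?thesis using True m e1 pd_sum[of m A]
      by (simp add: algebra_simps del: sum.lessThan_Suc)
  next
    case False
    have e1: "(\<Sum>j<m - 1. if odd j then ev j A else 0) = (\<Sum>j<m. if odd j then ev j A else 0)"
      using False m by (subst split) simp
    have "ev m A = - A * (real (m + 1) / 2 + (\<Sum>j<m. if even j then ev j A else 0))"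
      using False m by (subst ev.simps) simp
    moreover have "ev (m - 1) A = A * (real (m - 1) / 2 + (\<Sum>j<m - 1. if odd j then ev j A else 0))"
      using False m by (subst ev.simps) (auto simp: of_nat_diff elim: oddE)
    moreover have "A * (\<Sum>k<m. ev k A) = A * (\<Sum>j<m. if odd j then ev j A else 0) + A * (\<Sum>j<m. if even j then ev j A else 0)"
      using sum_split[where m=m and f="\<lambda>j. ev j A"] by (metis distrib_left)
    ultimately show ?thesis using False m e1 pd_sum[of m A]
      by (simp add: algebra_simps del: sum.lessThan_Suc)
  qed
qed

lemma rec: assumes "n \<ge> 3" shows "p n A = (2 - (-1) ^ n * A) * p (n - 1) A - p (n - 2) A"
proof -
  define k where "k = n - 3"
  have n: "n = Suc (Suc (Suc k))" using assms unfolding k_def by simp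
  have d: "ev (Suc (Suc k)) A - ev (Suc k) A = (-1) ^ Suc (Suc k) * A * pd (Suc (Suc k)) A"
    using ev_diff[of "Suc (Suc k)" A] by simp
  have "pd (Suc (Suc (Suc k))) A = (2 - (-1) ^ Suc (Suc (Suc k)) * A) * pd (Suc (Suc k)) A - pd (Suc k) A"
    using d by (simp add: algebra_simps)
  then show ?thesis using n by (simp add: p_eq)
qed

theorem theorem4p8:
  fixes A :: real and n :: nat
  assumes "n \<ge> 3"
  shows "(even n \<longrightarrow> A \<noteq> 2 \<longrightarrow> p n A / (2 - A) = p (n - 1) A - p (n - 2) A / (2 - A))
       \<and> (odd n \<longrightarrow> A \<noteq> -2 \<longrightarrow> p n A / (2 + A) = p (n - 1) A - p (n - 2) A / (2 + A))
       \<and> p n A = (2 - (-1) ^ n * A) * p (n - 1) A - p (n - 2) A"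
proof -
  have r: "p n A = (2 - (-1) ^ n * A) * p (n - 1) A - p (n - 2) A" by (rule rec[OF assms])
  have a: "even n \<longrightarrow> A \<noteq> 2 \<longrightarrow> p n A / (2 - A) = p (n - 1) A - p (n - 2) A / (2 - A)"
  proof (intro impI)
    assume "even n" "A \<noteq> 2"
    then have "p n A = (2 - A) * p (n - 1) A - p (n - 2) A" using r by simp
    then show "p n A / (2 - A) = p (n - 1) A - p (n - 2) A / (2 - A)"
      using \<open>A \<noteq> 2\<close> by (simp add: field_simps)
  qed
  have b: "odd n \<longrightarrow> A \<noteq> -2 \<longrightarrow> p n A / (2 + A) = p (n - 1) A - p (n - 2) A / (2 + A)"
  proof (intro impI)
    assume "odd n" "A \<noteq> -2"
    then have "p n A = (2 + A) * p (n - 1) A - p (n - 2) A" using r by simp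
    moreover have "2 + A \<noteq> 0" using \<open>A \<noteq> -2\<close> by linarith
    ultimately show "p n A / (2 + A) = p (n - 1) A - p (n - 2) A / (2 + A)"
      by (simp add: field_simps)
  qed
  show ?thesis using a b r by blast
qed

end
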